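(* Let $k$ be a field, $R=k[x_1,\ldots,x_n]$, and let $I$ be an almost reverse lexicographic ideal in $R$ whose last generator is $M_\omega=x^\omega$ with $\omega=(\omega_1,\ldots,\omega_\mu)$, $\omega_\mu>0$, $\mu\ge2$. Let $1\le i\le\mu-1$. For every $\alpha=(\alpha_1,\ldots,\alpha_i)\in\mathcal{I}_i$: (1) $0<f_{i+1}(\alpha)<\infty$; (2) $x^\alpha x_{i+1}^{f_{i+1}(\alpha)}\in\mathcal{G}(I)$; (3) if $\alpha_j\ge1$ for some $1\le j\le i$, then $f_{i+1}(\alpha_1,\ldots,\alpha_j,\ldots,\alpha_i)+1\le f_{i+1}(\alpha_1,\ldots,\alpha_j-1,\ldots,\alpha_i)$.
   Context: Monomial order: degree reverse lexicographic: for $M=x^\alpha,N=x^\beta$, $M>N$ iff $\deg M>\deg N$, or degrees are equal and for the largest $s$ with $\alpha_s\neq\beta_s$ one has $\alpha_s<\beta_s$. For $\alpha\in\mathbb{Z}^s_{\ge0}$, $x^\alpha=x_1^{\alpha_1}\cdots x_s^{\alpha_s}$, $|\alpha|=\sum\alpha_j$, and $\alpha\le\beta$ iff $x^\alpha\le x^\beta$. A monomial ideal $I$ is almost reverse lexicographic if for every monomial $M$ and every minimal monomial generator $N$ of $I$ with $\deg M=\deg N$ and $M>N$, one has $M\in I$. $\mathcal{G}(I)$ is the minimal monomial generating set; $\max M$ is the largest $i$ with $x_i\mid M$. The last generator $M_\omega$ is the element of $\mathcal{G}(I)$ of maximal degree that is smallest in the order among elements of $\mathcal{G}(I)$ of that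 degree; $\mu=\max M_\omega$. $f_1=\min\{t:x_1^t\in I\}$; for $2\le i\le\mu$, $\alpha\in\mathbb{Z}^{i-1}_{\ge0}$, $f_i(\alpha)=\min\{t\ge0:x^\alpha x_i^t\in I\}\in\mathbb{Z}_{\ge0}\cup\{\infty\}$. For $1\le i\le\mu-2$, $\mathcal{I}_i=\{(\alpha_1,\ldots,\alpha_i)\in\mathbb{Z}^i_{\ge0}: 0\le\alpha_1<f_1,\ 0\le\alpha_j<f_j(\alpha_1,\ldots,\alpha_{j-1})\ (2\le j\le i)\}$, and $\mathcal{I}_{\mu-1}$ is the set of $(\alpha_1,\ldots,\alpha_{\mu-1})$ satisfying these inequalities for $j\le\mu-1$ together with $(\alpha_1,\ldots,\alpha_{\mu-1})\ge(\omega_1,\ldots,\omega_{\mu-1})$. *)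

theory Defs
  imports Main "HOL-Library.Extended_Nat"
begin

text \<open>Monomials of k[x_1,...,x_n] are represented by exponent vectors
  a :: nat => nat with a j = 0 outside {1..n}. A monomial ideal is represented
  by the set of (exponent vectors of) monomials it contains.\<close>

definition mon :: "nat \<Rightarrow> (nat \<Rightarrow> nat) set" where
  "mon n = {a. \<forall>j. (j = 0 \<or> n < j) \<longrightarrow> a j = 0}"

definition mdeg :: "nat \<Rightarrow> (nat \<Rightarrow> nat) \<Rightarrow> nat" where
  "mdeg n a = (\<Sum>j = 1..n. a j)"

definition mdvd :: "(nat \<Rightarrow> nat) \<Rightarrow> (nat \<Rightarrow> nat) \<Rightarrow> bool" where
  "mdvd a b \<longleftrightarrow> (\<forall>j. a j \<le> b j)"

text \<open>Degree reverse lexicographic order: rl_gt n a b means x^a > x^b.\<close>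
definition rl_gt :: "nat \<Rightarrow> (nat \<Rightarrow> nat) \<Rightarrow> (nat \<Rightarrow> nat) \<Rightarrow> bool" where
  "rl_gt n a b \<longleftrightarrow> mdeg n a > mdeg n b \<or>
     (mdeg n a = mdeg n b \<and>
      (\<exists>s\<in>{1..n}. a s \<noteq> b s \<and> (\<forall>t\<in>{s<..n}. a t = b t) \<and> a s < b s))"

definition rl_le :: "nat \<Rightarrow> (nat \<Rightarrow> nat) \<Rightarrow> (nat \<Rightarrow> nat) \<Rightarrow> bool" where
  "rl_le n a b \<longleftrightarrow> a = b \<or> rl_gt n b a"

definition monomial_ideal :: "nat \<Rightarrow> (nat \<Rightarrow> nat) set \<Rightarrow> bool" where
  "monomial_ideal n I \<longleftrightarrow> I \<subseteq> mon n \<and>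
     (\<forall>a\<in>I. \<forall>b\<in>mon n. mdvd a b \<longrightarrow> b \<in> I)"

definition mingens :: "(nat \<Rightarrow> nat) set \<Rightarrow> (nat \<Rightarrow> nat) set" where
  "mingens I = {a\<in>I. \<forall>b\<in>I. mdvd b a \<longrightarrow> b = a}"

definition almost_revlex :: "nat \<Rightarrow> (nat \<Rightarrow> nat) set \<Rightarrow> bool" where
  "almost_revlex n I \<longleftrightarrow> (\<forall>M\<in>mon n. \<forall>N\<in>mingens I.
     mdeg n M = mdeg n N \<and> rl_gt n M N \<longrightarrow> M \<in> I)"

definition last_gen :: "nat \<Rightarrow> (nat \<Rightarrow> nat) set \<Rightarrow> (nat \<Rightarrow> nat) \<Rightarrow> bool" where
  "last_gen n I w \<longleftrightarrow> w \<in> mingens I \<and>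
     (\<forall>b\<in>mingens I. mdeg n b \<le> mdeg n w \<and>
        (mdeg n b = mdeg n w \<longrightarrow> rl_le n w b))"

definition xmon :: "nat \<Rightarrow> (nat \<Rightarrow> nat) \<Rightarrow> nat \<Rightarrow> (nat \<Rightarrow> nat)" where
  "xmon i \<alpha> t = (\<lambda>j. if 1 \<le> j \<and> j < i then \<alpha> j else if j = i then t else 0)"

definition fI :: "(nat \<Rightarrow> nat) set \<Rightarrow> nat \<Rightarrow> (nat \<Rightarrow> nat) \<Rightarrow> enat" where
  "fI I i \<alpha> = (if \<exists>t. xmon i \<alpha> t \<in> I then enat (LEAST t. xmon i \<alpha> t \<in> I) else \<infinity>)"

definition trunc :: "nat \<Rightarrow> (nat \<Rightarrow> nat) \<Rightarrow> (nat \<Rightarrow> nat)" where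
  "trunc m a = (\<lambda>j. if 1 \<le> j \<and> j \<le> m then a j else 0)"

text \<open>The set I_i (tuples represented as vectors vanishing outside {1..i}).\<close>
definition Iset :: "nat \<Rightarrow> (nat \<Rightarrow> nat) set \<Rightarrow> (nat \<Rightarrow> nat) \<Rightarrow> nat \<Rightarrow> nat \<Rightarrow> (nat \<Rightarrow> nat) set" where
  "Iset n I w \<mu> i = {\<alpha>. (\<forall>j. (j = 0 \<or> i < j) \<longrightarrow> \<alpha> j = 0) \<and>
      (\<forall>j\<in>{1..i}. enat (\<alpha> j) < fI I j \<alpha>) \<and>
      (i = \<mu> - 1 \<longrightarrow> rl_le n (trunc (\<mu> - 1) w) \<alpha>)}"

end

theory Submission
  imports Defs
begin

lemma ideal_up: "monomial_ideal n I \<Longrightarrow> a \<in> I \<Longrightarrow> b \<in> mon n \<Longrightarrow> mdvd a b \<Longrightarrow> b \<in> I"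
  unfolding monomial_ideal_def by blast

lemma fI_le: "xmon k a t \<in> I \<Longrightarrow> fI I k a \<le> enat t"
  by (auto simp: fI_def intro: Least_le)

lemma fI_enat: "fI I k a = enat f \<Longrightarrow> xmon k a f \<in> I \<and> (\<forall>t. xmon k a t \<in> I \<longrightarrow> f \<le> t)"
  by (auto simp: fI_def split: if_splits intro: LeastI Least_le)

lemma fI_notin: "enat t < fI I k a \<Longrightarrow> xmon k a t \<notin> I"
  using fI_le by (metis leD)

lemma mdeg_upd: assumes "k \<in> {1..n}" shows "mdeg n (a(k:=v)) + a k = mdeg n a + v"
proof -
  have "mdeg n (a(k:=v)) = v + (\<Sum>j\<in>{1..n}-{k}. a j)"
    unfolding mdeg_def using assms by (subst sum.remove[of _ k]) (auto intro!: sum.cong)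
  moreover have "mdeg n a = a k + (\<Sum>j\<in>{1..n}-{k}. a j)"
    unfolding mdeg_def using assms by (subst sum.remove[of _ k]) auto
  ultimately show ?thesis by simp
qed

lemma mdeg_mono: "mdvd a b \<Longrightarrow> mdeg n a \<le> mdeg n b"
  unfolding mdeg_def mdvd_def by (intro sum_mono) auto

lemma mdeg_eq: assumes "a \<in> mon n" "b \<in> mon n" "mdvd a b" "mdeg n a = mdeg n b" shows "a = b"
proof (rule ccontr)
  assume "a \<noteq> b"
  then obtain j where j: "a j \<noteq> b j" by auto
  have "j \<in> {1..n}"
  proof (rule ccontr)
    assume "j \<notin> {1..n}"
    then have "j = 0 \<or> n < j" by auto
    then show False using j assms(1,2) unfolding mon_def by auto
  qed
  moreover have "a j < b j" using j assms(3) unfolding mdvd_def by (metis le_neq_implies_less)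
  ultimately have "mdeg n a < mdeg n b" unfolding mdeg_def
    using assms(3) unfolding mdvd_def by (intro sum_strict_mono_ex1) auto
  thus False using assms(4) by simp
qed

lemma mingen_below:
  assumes mi: "monomial_ideal n I" and aI: "a \<in> I"
  shows "\<exists>g\<in>mingens I. mdvd g a"
proof -
  let ?P = "\<lambda>k. \<exists>b\<in>I. mdvd b a \<and> mdeg n b = k"
  have "?P (mdeg n a)" using aI by (auto simp: mdvd_def)
  define k where "k = (LEAST k. ?P k)"
  have k: "?P k" "\<And>m. ?P m \<Longrightarrow> k \<le> m"
    unfolding k_def using \<open>?P (mdeg n a)\<close> by (auto intro: LeastI Least_le)
  then obtain b where b: "b \<in> I" "mdvd b a" "mdeg n b = k" by blast
  have "b \<in> mingens I"
    unfolding mingens_def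
  proof (intro CollectI conjI ballI impI)
    show "b \<in> I" by fact
    fix c assume c: "c \<in> I" "mdvd c b"
    then have "mdvd c a" using b(2) unfolding mdvd_def using le_trans by blast
    then have "k \<le> mdeg n c" using k(2) c by blast
    moreover have "mdeg n c \<le> mdeg n b" using mdeg_mono c(2) by blast
    ultimately show "c = b" using mdeg_eq[of c n b] c b mi unfolding monomial_ideal_def by auto
  qed
  thus ?thesis using b by blast
qed

lemma big_in:
  assumes mi: "monomial_ideal n I" and ar: "almost_revlex n I" and wm: "\<omega> \<in> mingens I"
    and wz: "\<forall>j>\<mu>. \<omega> j = 0" and mun: "\<mu> \<le> n" and mu1: "1 \<le> \<mu>"
  shows "a \<in> mon n \<Longrightarrow> (\<forall>j>\<mu>. a j = 0) \<Longrightarrow> a \<mu> < \<omega> \<mu> \<Longrightarrow> mdeg n \<omega> \<le> mdeg n a \<Longrightarrow> a \<in> I"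
proof (induction "mdeg n a - mdeg n \<omega>" arbitrary: a)
  case 0
  then have eq: "mdeg n a = mdeg n \<omega>" by simp
  have "rl_gt n a \<omega>" unfolding rl_gt_def
    using eq 0 mun mu1 wz by (intro disjI2 conjI bexI[of _ \<mu>]) auto
  moreover have "\<forall>M\<in>mon n. \<forall>N\<in>mingens I. mdeg n M = mdeg n N \<and> rl_gt n M N \<longrightarrow> M \<in> I"
    using ar unfolding almost_revlex_def .
  ultimately show ?case using 0(2) wm eq by blast
next
  case (Suc k)
  then have "mdeg n a \<noteq> 0" by simp
  then have "\<exists>j\<in>{1..n}. a j \<noteq> 0" unfolding mdeg_def
    by (meson sum.neutral)
  then obtain j where j: "j \<in> {1..n}" "a j > 0" by blast
  define b where "b = a(j := a j - 1)"
  have "mdeg n b + a j = mdeg n a + (a j - 1)" using mdeg_upd[OF j(1)] b_def by simp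
  hence db: "mdeg n b + 1 = mdeg n a" using j by simp
  have bm: "b \<in> mon n" using Suc.prems j by (auto simp: mon_def b_def)
  have "b \<in> I"
  proof (rule Suc.hyps)
    show "k = mdeg n b - mdeg n \<omega>" using Suc.hyps(2) db by simp
    show "\<forall>j>\<mu>. b j = 0" using Suc.prems by (simp add: b_def)
    show "b \<mu> < \<omega> \<mu>" using Suc.prems by (auto simp: b_def)
    show "mdeg n \<omega> \<le> mdeg n b" using Suc.hyps(2) db by simp
  qed (rule bm)
  then show ?case using ideal_up[OF mi \<open>b\<in>I\<close> Suc.prems(1)] by (auto simp: mdvd_def b_def)
qed


theorem lemma2p9:
  fixes n \<mu> i :: nat and I :: "(nat \<Rightarrow> nat) set" and \<omega> \<alpha> :: "nat \<Rightarrow> nat"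
  assumes "monomial_ideal n I"
    and "almost_revlex n I"
    and "last_gen n I \<omega>"
    and "\<omega> \<mu> > 0" and "\<forall>j>\<mu>. \<omega> j = 0" and "\<mu> \<ge> 2"
    and "1 \<le> i" and "i \<le> \<mu> - 1"
    and "\<alpha> \<in> Iset n I \<omega> \<mu> i"
  shows "(0 < fI I (i + 1) \<alpha> \<and> fI I (i + 1) \<alpha> < \<infinity>) \<and>
         xmon (i + 1) \<alpha> (the_enat (fI I (i + 1) \<alpha>)) \<in> mingens I \<and>
         (\<forall>j\<in>{1..i}. 1 \<le> \<alpha> j \<longrightarrow>
           fI I (i + 1) \<alpha> + 1 \<le> fI I (i + 1) (\<alpha>(j := \<alpha> j - 1)))"
proof -
  note mi = assms(1) and ar = assms(2)
  have wm: "\<omega> \<in> mingens I" using assms(3) by (simp add: last_gen_def)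
  have wI: "\<omega> \<in> I" using wm by (simp add: mingens_def)
  have wmon: "\<omega> \<in> mon n" using wI mi by (auto simp: monomial_ideal_def)
  have mun: "\<mu> \<le> n"
  proof (rule ccontr)
    assume "\<not> \<mu> \<le> n"
    then have "\<omega> \<mu> = 0" using wmon unfolding mon_def by auto
    thus False using assms(4) by simp
  qed
  have mu1: "1 \<le> \<mu>" using assms(6) by simp
  have in1: "i + 1 \<le> n" using assms(6,8) mun by simp
  have xmon_mon: "\<And>a t. xmon (i+1) a t \<in> mon n" using in1 by (auto simp: mon_def xmon_def)
  have az: "\<forall>j. (j = 0 \<or> i < j) \<longrightarrow> \<alpha> j = 0"
    and alt: "\<forall>j\<in>{1..i}. enat (\<alpha> j) < fI I j \<alpha>"
    and arl: "i = \<mu> - 1 \<longrightarrow> rl_le n (trunc (\<mu> - 1) \<omega>) \<alpha>"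
    using assms(9) by (simp_all add: Iset_def)
  have x0: "xmon (i+1) \<alpha> 0 \<notin> I"
  proof -
    have "xmon (i+1) \<alpha> 0 = xmon i \<alpha> (\<alpha> i)" using assms(7) by (auto simp: xmon_def)
    moreover have "enat (\<alpha> i) < fI I i \<alpha>" using alt assms(7) by auto
    ultimately show ?thesis using fI_notin by metis
  qed
  note BI = big_in[OF mi ar wm assms(5) mun mu1]
  have fin: "\<exists>t. xmon (i+1) \<alpha> t \<in> I"
  proof (cases "i + 1 < \<mu>")
    case True
    have "xmon (i+1) \<alpha> (mdeg n \<omega>) \<in> I"
    proof (rule BI)
      show "xmon (i+1) \<alpha> (mdeg n \<omega>) \<in> mon n" by (rule xmon_mon)
      show "\<forall>j>\<mu>. xmon (i + 1) \<alpha> (mdeg n \<omega>) j = 0" using True by (auto simp: xmon_def)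
      show "xmon (i + 1) \<alpha> (mdeg n \<omega>) \<mu> < \<omega> \<mu>" using True assms(4) by (auto simp: xmon_def)
      have "xmon (i + 1) \<alpha> (mdeg n \<omega>) (i+1) \<le> mdeg n (xmon (i + 1) \<alpha> (mdeg n \<omega>))"
        unfolding mdeg_def using in1 by (intro member_le_sum) auto
      then show "mdeg n \<omega> \<le> mdeg n (xmon (i + 1) \<alpha> (mdeg n \<omega>))" by (simp add: xmon_def)
    qed
    then show ?thesis by blast
  next
    case False
    then have imu: "i + 1 = \<mu>" using assms(6,8) by simp
    define \<beta> where "\<beta> = trunc (\<mu>-1) \<omega>"
    have wb: "\<omega> = \<beta>(\<mu> := \<omega> \<mu>)"
    proof
      fix j show "\<omega> j = (\<beta>(\<mu> := \<omega> \<mu>)) j"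
        using wmon assms(5) unfolding \<beta>_def trunc_def mon_def
        by (cases "j = 0"; cases "\<mu> < j"; cases "j = \<mu>") auto
    qed
    have bmu: "\<beta> \<mu> = 0" using mu1 by (auto simp: \<beta>_def trunc_def)
    have dw: "mdeg n \<omega> = mdeg n \<beta> + \<omega> \<mu>"
    proof -
      have "mdeg n (\<beta>(\<mu> := \<omega> \<mu>)) + \<beta> \<mu> = mdeg n \<beta> + \<omega> \<mu>"
        by (rule mdeg_upd) (use mun mu1 in auto)
      then show ?thesis using bmu wb by simp
    qed
    have xa: "\<And>t. xmon \<mu> \<alpha> t = \<alpha>(\<mu> := t)"
    proof
      fix t j show "xmon \<mu> \<alpha> t j = (\<alpha>(\<mu> := t)) j"
        using az imu by (cases "j = 0") (auto simp: xmon_def)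
    qed
    have amu: "\<alpha> \<mu> = 0" using az imu by auto
    have dx: "\<And>t. mdeg n (xmon \<mu> \<alpha> t) = mdeg n \<alpha> + t"
    proof -
      fix t
      have "mdeg n (\<alpha>(\<mu> := t)) + \<alpha> \<mu> = mdeg n \<alpha> + t"
        by (rule mdeg_upd) (use mun mu1 in auto)
      then show "mdeg n (xmon \<mu> \<alpha> t) = mdeg n \<alpha> + t" using amu xa by simp
    qed
    have xm: "\<And>t. xmon \<mu> \<alpha> t \<in> mon n" using xmon_mon imu by metis
    from arl imu have "\<beta> = \<alpha> \<or> rl_gt n \<alpha> \<beta>" by (simp add: rl_le_def \<beta>_def)
    then have "\<exists>t. xmon \<mu> \<alpha> t \<in> I"
    proof (elim disjE)
      assume "\<beta> = \<alpha>"
      then have "xmon \<mu> \<alpha> (\<omega> \<mu>) = \<omega>" using xa wb by simp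
      thus ?thesis using wI by metis
    next
      assume g: "rl_gt n \<alpha> \<beta>"
      then consider (gt) "mdeg n \<alpha> > mdeg n \<beta>"
        | (eq) s where "mdeg n \<alpha> = mdeg n \<beta>" "s \<in> {1..n}" "\<alpha> s \<noteq> \<beta> s"
            "\<forall>t\<in>{s<..n}. \<alpha> t = \<beta> t" "\<alpha> s < \<beta> s"
        unfolding rl_gt_def by blast
      then show ?thesis
      proof cases
        case gt
        have "xmon \<mu> \<alpha> (\<omega> \<mu> - 1) \<in> I"
        proof (rule BI)
          show "xmon \<mu> \<alpha> (\<omega> \<mu> - 1) \<in> mon n" by (rule xm)
          show "\<forall>j>\<mu>. xmon \<mu> \<alpha> (\<omega> \<mu> - 1) j = 0" by (auto simp: xmon_def)
          show "xmon \<mu> \<alpha> (\<omega> \<mu> - 1) \<mu> < \<omega> \<mu>" using assms(4) by (auto simp: xmon_def)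
          show "mdeg n \<omega> \<le> mdeg n (xmon \<mu> \<alpha> (\<omega> \<mu> - 1))" using dx dw gt assms(4) by simp
        qed
        thus ?thesis by blast
      next
        case eq
        have smu: "s < \<mu>"
        proof (rule ccontr)
          assume "\<not> s < \<mu>"
          then have "\<alpha> s = 0" "\<beta> s = 0" using az imu by (auto simp: \<beta>_def trunc_def)
          thus False using eq(3) by simp
        qed
        have bs: "\<beta> s = \<omega> s" using smu eq(2) by (auto simp: \<beta>_def trunc_def)
        have "rl_gt n (xmon \<mu> \<alpha> (\<omega> \<mu>)) \<omega>"
          unfolding rl_gt_def
        proof (intro disjI2 conjI bexI[of _ s])
          show "mdeg n (xmon \<mu> \<alpha> (\<omega> \<mu>)) = mdeg n \<omega>" using dx dw eq(1) by simp
          show "s \<in> {1..n}" by fact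
          show "xmon \<mu> \<alpha> (\<omega> \<mu>) s \<noteq> \<omega> s" "xmon \<mu> \<alpha> (\<omega> \<mu>) s < \<omega> s"
            using eq(3,5) bs smu eq(2) by (auto simp: xmon_def)
          show "\<forall>t\<in>{s<..n}. xmon \<mu> \<alpha> (\<omega> \<mu>) t = \<omega> t"
          proof
            fix t assume t: "t \<in> {s<..n}"
            show "xmon \<mu> \<alpha> (\<omega> \<mu>) t = \<omega> t"
            proof (cases "t < \<mu>")
              case True
              then have "\<beta> t = \<omega> t" using t smu True by (auto simp: \<beta>_def trunc_def)
              then show ?thesis using eq(4) t True smu by (auto simp: xmon_def)
            next
              case False
              then show ?thesis using assms(5) by (cases "t = \<mu>") (auto simp: xmon_def)
            qed
          qed
        qed
        moreover have "\<forall>M\<in>mon n. \<forall>N\<in>mingens I. mdeg n M = mdeg n N \<and> rl_gt n M N \<longrightarrow> M \<in> I"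
          using ar unfolding almost_revlex_def .
        moreover have "mdeg n (xmon \<mu> \<alpha> (\<omega> \<mu>)) = mdeg n \<omega>" using dx dw eq(1) by simp
        ultimately have "xmon \<mu> \<alpha> (\<omega> \<mu>) \<in> I" using wm xm[of "\<omega> \<mu>"] by blast
        thus ?thesis by blast
      qed
    qed
    then show ?thesis using imu by simp
  qed
  define f where "f = (LEAST t. xmon (i+1) \<alpha> t \<in> I)"
  have Ff: "fI I (i+1) \<alpha> = enat f" using fin by (simp add: fI_def f_def)
  have fI': "xmon (i+1) \<alpha> f \<in> I" "\<And>t. xmon (i+1) \<alpha> t \<in> I \<Longrightarrow> f \<le> t"
    using fI_enat[OF Ff] by auto
  have f0: "0 < f"
  proof (rule ccontr)
    assume "\<not> 0 < f" then have "f = 0" by simp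
    thus False using fI'(1) x0 by simp
  qed
  have P3: "\<forall>j\<in>{1..i}. 1 \<le> \<alpha> j \<longrightarrow> fI I (i + 1) \<alpha> + 1 \<le> fI I (i + 1) (\<alpha>(j := \<alpha> j - 1))"
  proof (intro ballI impI)
    fix j assume j: "j \<in> {1..i}" "1 \<le> \<alpha> j"
    define \<alpha>' where "\<alpha>' = \<alpha>(j := \<alpha> j - 1)"
    show "fI I (i + 1) \<alpha> + 1 \<le> fI I (i + 1) (\<alpha>(j := \<alpha> j - 1))"
      unfolding \<alpha>'_def[symmetric]
    proof (rule ccontr)
      assume H: "\<not> fI I (i + 1) \<alpha> + 1 \<le> fI I (i + 1) \<alpha>'"
      obtain f' where f': "fI I (i+1) \<alpha>' = enat f'" "f' \<le> f"
      proof (cases "fI I (i+1) \<alpha>'")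
        case (enat f')
        then show ?thesis using that H Ff by (simp add: one_enat_def)
      next
        case infinity
        then show ?thesis using H by simp
      qed
      have Nin: "xmon (i+1) \<alpha>' f' \<in> I" using fI_enat[OF f'(1)] by simp
      obtain G where G: "G \<in> mingens I" "mdvd G (xmon (i+1) \<alpha>' f')"
        using mingen_below[OF mi Nin] by blast
      have GI: "G \<in> I" using G(1) by (simp add: mingens_def)
      have Gm: "G \<in> mon n" using GI mi by (auto simp: monomial_ideal_def)
      have Gk: "\<And>k. G k \<le> xmon (i+1) \<alpha>' f' k" using G(2) by (simp add: mdvd_def)
      show False
      proof (cases "G (i+1) = 0")
        case True
        have "mdvd G (xmon (i+1) \<alpha> 0)"
          unfolding mdvd_def
        proof
          fix k
          show "G k \<le> xmon (i+1) \<alpha> 0 k"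
            using Gk[of k] True by (auto simp: xmon_def \<alpha>'_def split: if_splits)
        qed
        then have "xmon (i+1) \<alpha> 0 \<in> I" using ideal_up[OF mi GI xmon_mon] by blast
        thus False using x0 by simp
      next
        case False
        define H where "H = G(i+1 := G (i+1) - 1)"
        define G' where "G' = H(j := G j + 1)"
        have jn: "j \<in> {1..n}" "i+1 \<in> {1..n}" using j in1 by auto
        have ji: "j \<noteq> i + 1" using j by auto
        have "mdeg n H + G (i+1) = mdeg n G + (G (i+1) - 1)"
          unfolding H_def by (rule mdeg_upd[OF jn(2)])
        moreover have "mdeg n G' + H j = mdeg n H + (G j + 1)"
          unfolding G'_def by (rule mdeg_upd[OF jn(1)])
        moreover have "H j = G j" using ji by (simp add: H_def)
        ultimately have dG: "mdeg n G' = mdeg n G" using False by simp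
        have G'm: "G' \<in> mon n" using Gm jn by (auto simp: mon_def G'_def H_def)
        have "rl_gt n G' G"
          unfolding rl_gt_def
        proof (intro disjI2 conjI bexI[of _ "i+1"])
          show "mdeg n G' = mdeg n G" by fact
          show "i+1 \<in> {1..n}" by fact
          show "G' (i+1) \<noteq> G (i+1)" "G' (i+1) < G (i+1)"
            using False ji by (auto simp: G'_def H_def)
          show "\<forall>t\<in>{i + 1<..n}. G' t = G t" using j by (auto simp: G'_def H_def)
        qed
        moreover have "\<forall>M\<in>mon n. \<forall>N\<in>mingens I. mdeg n M = mdeg n N \<and> rl_gt n M N \<longrightarrow> M \<in> I"
          using ar unfolding almost_revlex_def .
        ultimately have G'I: "G' \<in> I" using G(1) G'm dG by blast
        have "mdvd G' (xmon (i+1) \<alpha> (f' - 1))"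
          unfolding mdvd_def
        proof
          fix k
          show "G' k \<le> xmon (i+1) \<alpha> (f' - 1) k"
            using Gk[of k] j ji by (auto simp: xmon_def \<alpha>'_def G'_def H_def split: if_splits)
        qed
        then have "xmon (i+1) \<alpha> (f' - 1) \<in> I" using ideal_up[OF mi G'I xmon_mon] by blast
        then have "f \<le> f' - 1" using fI'(2) by blast
        moreover have "G (i+1) \<le> f'" using Gk[of "i+1"] by (simp add: xmon_def)
        ultimately show False using False f'(2) by simp
      qed
    qed
  qed
  have P2: "xmon (i+1) \<alpha> f \<in> mingens I"
    unfolding mingens_def
  proof (intro CollectI conjI ballI impI)
    show "xmon (i+1) \<alpha> f \<in> I" by (rule fI'(1))
    fix b assume b: "b \<in> I" "mdvd b (xmon (i+1) \<alpha> f)"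
    have bk: "\<And>k. b k \<le> xmon (i+1) \<alpha> f k" using b(2) by (simp add: mdvd_def)
    show "b = xmon (i+1) \<alpha> f"
    proof (rule ccontr)
      assume "b \<noteq> xmon (i+1) \<alpha> f"
      then obtain k where k: "b k \<noteq> xmon (i+1) \<alpha> f k" by auto
      then have lt: "b k < xmon (i+1) \<alpha> f k" using bk[of k] by simp
      show False
      proof (cases "k = i + 1")
        case True
        have "mdvd b (xmon (i+1) \<alpha> (b (i+1)))"
          unfolding mdvd_def
        proof
          fix m show "b m \<le> xmon (i+1) \<alpha> (b (i+1)) m"
            using bk[of m] by (auto simp: xmon_def)
        qed
        then have "xmon (i+1) \<alpha> (b (i+1)) \<in> I" using ideal_up[OF mi b(1) xmon_mon] by blast
        then have "f \<le> b (i+1)" using fI'(2) by blast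
        thus False using lt True by (simp add: xmon_def)
      next
        case False
        then have kr: "k \<in> {1..i}" "b k < \<alpha> k" using lt by (auto simp: xmon_def split: if_splits)
        then have a1: "1 \<le> \<alpha> k" by simp
        have "mdvd b (xmon (i+1) (\<alpha>(k := \<alpha> k - 1)) f)"
          unfolding mdvd_def
        proof
          fix m show "b m \<le> xmon (i+1) (\<alpha>(k := \<alpha> k - 1)) f m"
            using bk[of m] kr by (auto simp: xmon_def)
        qed
        then have "xmon (i+1) (\<alpha>(k := \<alpha> k - 1)) f \<in> I" using ideal_up[OF mi b(1) xmon_mon] by blast
        then have "fI I (i+1) (\<alpha>(k := \<alpha> k - 1)) \<le> enat f" by (rule fI_le)
        moreover have "fI I (i + 1) \<alpha> + 1 \<le> fI I (i + 1) (\<alpha>(k := \<alpha> k - 1))"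
          using P3 kr a1 by blast
        ultimately have "enat f + 1 \<le> enat f" using Ff by (metis order_trans)
        then have "enat (Suc f) \<le> enat f" by (simp add: one_enat_def)
        thus False by simp
      qed
    qed
  qed
  have "0 < enat f" using f0 by (simp add: zero_enat_def)
  then show ?thesis using Ff P2 P3 by simp
qed

end
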